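(* Let $j\neq k$ be jobs with $\sigma_j<\sigma_k$ such that $(j,k)$ is not a red pair. Then, in the schedule produced by $1$-SORT, \[ D(j,k)\le\max\left\{\frac{2\mu+1}{\mu+1},\,1+\nu\right\}\cdot D^*(j,k). \]
   Context: Setting: single machine, jobs $J=\{1,\dots,n\}$, each job $j$ with test time $t_j\ge0$ and processing time $p_j\ge0$ (revealed only when the test is executed); each job's test must be executed before its processing part, which may start any time after the test; operations are non-preemptive and the machine does one at a time. $\sigma_j=t_j+p_j$, $m_j=\max\{t_j,p_j\}$. Standing assumption (general position): no two of the $3n$ numbers $t_1,\dots,t_n,p_1,\dots,p_n,\sigma_1,\dots,\sigma_n$ are equal. Algorithm $1$-SORT: keep a priority queue of available operations, initially the test of every job $j$ with priority $t_j$; repeatedly remove a minimum-priority operation and execute it immediately; after executing the test of $j$, insert the processing part of $j$ with priority $p_j$. For a schedule and distinct jobs $j,k$, let $d_{k,j}$ be the total amount of time during which operations (test and/or processing part) of $k$ are executed before the completion time of $j$, and $D(j,k)=d_{j,k}+d_{k,j}$, evaluated for the $1$-SORT schedule. Let $D^*(j,k)=\min\{\sigma_j,\sigma_k\}$ (the corresponding quantity in an optimal schedule). Fix constants $\mu>1$ and $0<\nu<1$ with $\mu\nu>1$ and $1+\frac1\mu\le\nu+\nu^2$. A job $j$ is imbalanced if $m_j\ge\mu\min\{t_j,p_j\}$. For distinct jobs $j,k$, the ordered pair $(j,k)$ is a red pair if $j$ is imbalanced, $m_j\ge t_k\ge\nu m_j$, and $p_k\ge\nu t_k$. *)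

theory Defs
  imports Complex_Main
begin

datatype 'a oper = Test 'a | Proc 'a

fun owner :: "'a oper \<Rightarrow> 'a" where
  "owner (Test j) = j" | "owner (Proc j) = j"

text \<open>Priority (= length) of an operation.\<close>
fun olen :: "('a \<Rightarrow> real) \<Rightarrow> ('a \<Rightarrow> real) \<Rightarrow> 'a oper \<Rightarrow> real" where
  "olen t p (Test j) = t j" | "olen t p (Proc j) = p j"

text \<open>Simulation of 1-SORT: state = (operations executed so far, in order; priority queue).\<close>
primrec sort_run :: "'a set \<Rightarrow> ('a \<Rightarrow> real) \<Rightarrow> ('a \<Rightarrow> real) \<Rightarrow> nat \<Rightarrow> 'a oper list \<times> 'a oper set" where
  "sort_run J t p 0 = ([], Test ` J)"
| "sort_run J t p (Suc i) =
     (let (L, Q) = sort_run J t p i in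
      if Q = {} then (L, Q)
      else let x = (ARG_MIN (olen t p) y. y \<in> Q) in
           (L @ [x], (Q - {x}) \<union> (case x of Test j \<Rightarrow> {Proc j} | Proc j \<Rightarrow> {})))"

text \<open>The 1-SORT schedule: the sequence of operations, executed back to back from time 0.\<close>
definition one_sort :: "'a set \<Rightarrow> ('a \<Rightarrow> real) \<Rightarrow> ('a \<Rightarrow> real) \<Rightarrow> 'a oper list" where
  "one_sort J t p = fst (sort_run J t p (2 * card J))"

text \<open>d_{k,j}: total time operations of k are executed before the completion of j
  (i.e. before the processing part of j ends) in the 1-SORT schedule.\<close>
definition dd :: "'a set \<Rightarrow> ('a \<Rightarrow> real) \<Rightarrow> ('a \<Rightarrow> real) \<Rightarrow> 'a \<Rightarrow> 'a \<Rightarrow> real" where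
  "dd J t p k j = sum_list (map (\<lambda>x. if owner x = k then olen t p x else 0)
                       (takeWhile (\<lambda>x. x \<noteq> Proc j) (one_sort J t p)))"

definition DD :: "'a set \<Rightarrow> ('a \<Rightarrow> real) \<Rightarrow> ('a \<Rightarrow> real) \<Rightarrow> 'a \<Rightarrow> 'a \<Rightarrow> real" where
  "DD J t p j k = dd J t p j k + dd J t p k j"

definition general_position :: "'a set \<Rightarrow> ('a \<Rightarrow> real) \<Rightarrow> ('a \<Rightarrow> real) \<Rightarrow> bool" where
  "general_position J t p \<longleftrightarrow>
     (\<forall>j\<in>J. \<forall>k\<in>J.
        (j \<noteq> k \<longrightarrow> t j \<noteq> t k \<and> p j \<noteq> p k \<and> t j + p j \<noteq> t k + p k) \<and>
        t j \<noteq> p k \<and> t j \<noteq> t k + p k \<and> p j \<noteq> t k + p k)"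

definition imbalanced :: "real \<Rightarrow> ('a \<Rightarrow> real) \<Rightarrow> ('a \<Rightarrow> real) \<Rightarrow> 'a \<Rightarrow> bool" where
  "imbalanced \<mu> t p j \<longleftrightarrow> max (t j) (p j) \<ge> \<mu> * min (t j) (p j)"

definition red_pair :: "real \<Rightarrow> real \<Rightarrow> ('a \<Rightarrow> real) \<Rightarrow> ('a \<Rightarrow> real) \<Rightarrow> 'a \<Rightarrow> 'a \<Rightarrow> bool" where
  "red_pair \<mu> \<nu> t p j k \<longleftrightarrow> j \<noteq> k \<and> imbalanced \<mu> t p j \<and>
     max (t j) (p j) \<ge> t k \<and> t k \<ge> \<nu> * max (t j) (p j) \<and> p k \<ge> \<nu> * t k"

end

theory Submission
  imports Defs
begin


definition key :: "('a \<Rightarrow> real) \<Rightarrow> ('a \<Rightarrow> real) \<Rightarrow> 'a oper \<Rightarrow> real" where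
 "key t p x = (case x of Test j \<Rightarrow> t j | Proc j \<Rightarrow> max (t j) (p j))"

definition sinv :: "'a set \<Rightarrow> ('a\<Rightarrow>real) \<Rightarrow> ('a\<Rightarrow>real) \<Rightarrow> 'a oper list \<Rightarrow> 'a oper set \<Rightarrow> bool" where
 "sinv J t p L Q \<longleftrightarrow>
   distinct L \<and> set L \<inter> Q = {} \<and> set L \<union> Q \<subseteq> Test`J \<union> Proc`J \<and>
   (\<forall>j. Proc j \<in> set L \<union> Q \<longrightarrow> Test j \<in> set L) \<and>
   (\<forall>j\<in>J. Test j \<in> set L \<union> Q \<and> (Proc j \<in> set L \<union> Q \<or> Test j \<in> Q)) \<and>
   sorted (map (key t p) L) \<and> (\<forall>x\<in>set L. \<forall>y\<in>Q. key t p x \<le> key t p y)"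

lemma olen_key: "olen t p y \<le> key t p y"
  by (cases y) (auto simp: key_def)

lemma sinv_step:
  assumes fin: "finite J" and I: "sinv J t p L Q" and ne: "Q \<noteq> {}"
    and xd: "x = (ARG_MIN (olen t p) y. y \<in> Q)"
  shows "sinv J t p (L @ [x]) (Q - {x} \<union> (case x of Test j \<Rightarrow> {Proc j} | Proc j \<Rightarrow> {}))"
proof -
  have finQ: "finite Q" using I fin unfolding sinv_def by (meson finite_Un finite_imageI finite_subset le_sup_iff)
  have xQ: "x \<in> Q" using arg_min_if_finite(1)[OF finQ ne, of "olen t p"] xd by (simp add: arg_min_on_def)
  have xmin: "\<And>y. y \<in> Q \<Longrightarrow> olen t p x \<le> olen t p y"
    using arg_min_least[OF finQ ne, of _ "olen t p"] xd by (simp add: arg_min_on_def)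
  have xkey: "\<And>y. y \<in> set L \<Longrightarrow> key t p y \<le> key t p x" using I xQ unfolding sinv_def by blast
  show ?thesis
  proof (cases x)
    case (Test j0)
    have "Proc j0 \<notin> set L" using I xQ Test unfolding sinv_def by blast
    moreover have "Proc j0 \<notin> Q" using I xQ Test unfolding sinv_def by blast
    moreover have "j0 \<in> J" using I xQ Test unfolding sinv_def by blast
    moreover have "\<And>y. y \<in> Q \<Longrightarrow> t j0 \<le> key t p y" using xmin olen_key Test by (metis olen.simps(1) order_trans)
    moreover have "\<And>y. y \<in> set L \<Longrightarrow> key t p y \<le> max (t j0) (p j0)"
      using xkey Test by (metis key_def max.coboundedI1 oper.simps(5))
    ultimately show ?thesis using I xQ xkey Test unfolding sinv_def
      by (auto simp: sorted_append key_def)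
  next
    case (Proc j0)
    have T: "Test j0 \<in> set L" using I xQ Proc unfolding sinv_def by blast
    have "\<And>y. y \<in> Q \<Longrightarrow> key t p x \<le> key t p y"
    proof -
      fix y assume "y \<in> Q"
      then have "t j0 \<le> key t p y" "p j0 \<le> key t p y"
        using I T xmin[of y] olen_key[of t p y] Proc unfolding sinv_def by (auto simp: key_def)
      then show "key t p x \<le> key t p y" using Proc by (simp add: key_def)
    qed
    then show ?thesis using I xQ xkey Proc unfolding sinv_def
      by (auto simp: sorted_append)
  qed
qed

lemma sinv_run: "finite J \<Longrightarrow> sinv J t p (fst (sort_run J t p i)) (snd (sort_run J t p i))"
proof (induction i)
  case 0
  then show ?case by (auto simp: sinv_def)
next
  case (Suc i)
  obtain L Q where e: "sort_run J t p i = (L, Q)" by force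
  show ?case using Suc sinv_step[of J t p L Q] e by (auto simp: Let_def)
qed

lemma len_run: "snd (sort_run J t p i) \<noteq> {} \<Longrightarrow> length (fst (sort_run J t p i)) = i"
proof (induction i)
  case 0
  then show ?case by simp
next
  case (Suc i)
  obtain L Q where e: "sort_run J t p i = (L, Q)" by force
  show ?case using Suc e by (auto simp: Let_def split: if_splits)
qed

lemma final:
  assumes fin: "finite J"
  shows "sinv J t p (one_sort J t p) {}"
proof -
  let ?S = "sort_run J t p (2 * card J)"
  have I: "sinv J t p (fst ?S) (snd ?S)" using sinv_run[OF fin] .
  have "snd ?S = {}"
  proof (rule ccontr)
    assume ne: "snd ?S \<noteq> {}"
    have len: "length (fst ?S) = 2 * card J" using len_run[OF ne] .
    have cA: "card (Test`J \<union> Proc`J) = 2 * card J"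
      using fin by (subst card_Un_disjoint) (auto simp: card_image inj_on_def)
    have sub: "set (fst ?S) \<subseteq> Test`J \<union> Proc`J" using I unfolding sinv_def by blast
    have "card (set (fst ?S)) = 2 * card J" using I len distinct_card unfolding sinv_def by metis
    then have "set (fst ?S) = Test`J \<union> Proc`J" using sub cA fin by (metis card_subset_eq finite_Un finite_imageI)
    then show False using I ne unfolding sinv_def by blast
  qed
  then show ?thesis using I unfolding one_sort_def by simp
qed



lemma before:
  assumes s: "sorted (map (key t p) L)" and y: "y \<in> set L" and x: "x \<in> set L"
    and ne: "key t p x \<noteq> key t p y"
  shows "x \<in> set (takeWhile (\<lambda>z. z \<noteq> y) L) \<longleftrightarrow> key t p x < key t p y"
proof -
  obtain A B where L: "L = A @ y # B" and yA: "y \<notin> set A" using split_list_first[OF y] by blast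
  have tw: "takeWhile (\<lambda>z. z \<noteq> y) L = A" unfolding L using yA by (induction A) auto
  have xy: "x \<noteq> y" using ne by blast
  have "x \<in> set A \<or> x \<in> set B" using x xy L by auto
  moreover have "x \<in> set A \<Longrightarrow> key t p x \<le> key t p y" using s L by (auto simp: sorted_append)
  moreover have "x \<in> set B \<Longrightarrow> key t p y \<le> key t p x" using s L by (auto simp: sorted_append)
  ultimately show ?thesis using tw ne by auto
qed

lemma sum_delta_list: "distinct A \<Longrightarrow> sum_list (map (\<lambda>x. if x = a then c else (0::real)) A) = (if a \<in> set A then c else 0)"
  by (simp add: sum_list_distinct_conv_sum_set)

lemma dd_formula:
  assumes fin: "finite J" and gp: "general_position J t p" and jk: "j \<in> J" "k \<in> J" "j \<noteq> k"
  shows "dd J t p k j = (if t k < max (t j) (p j) then t k else 0)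
           + (if max (t k) (p k) < max (t j) (p j) then p k else 0)"
proof -
  let ?L = "one_sort J t p"
  have I: "sinv J t p ?L {}" using final[OF fin] .
  have inL: "Test i \<in> set ?L" "Proc i \<in> set ?L" if "i \<in> J" for i using I that unfolding sinv_def by auto
  let ?A = "takeWhile (\<lambda>x. x \<noteq> Proc j) ?L"
  have dA: "distinct ?A" using I unfolding sinv_def by simp
  have s: "sorted (map (key t p) ?L)" using I unfolding sinv_def by simp
  have g: "t k \<noteq> t j" "t k \<noteq> p j" "p k \<noteq> t j" "p k \<noteq> p j" using gp jk unfolding general_position_def by metis+
  have f: "(\<lambda>x. if owner x = k then olen t p x else 0) =
     (\<lambda>x. (if x = Test k then t k else 0) + (if x = Proc k then p k else 0))"
  proof
    fix x show "(if owner x = k then olen t p x else 0) = (if x = Test k then t k else 0) + (if x = Proc k then p k else 0)"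
      by (cases x) auto
  qed
  have "dd J t p k j = sum_list (map (\<lambda>x. if x = Test k then t k else 0) ?A) + sum_list (map (\<lambda>x. if x = Proc k then p k else 0) ?A)"
    unfolding dd_def f by (simp add: sum_list_addf)
  also have "\<dots> = (if Test k \<in> set ?A then t k else 0) + (if Proc k \<in> set ?A then p k else 0)"
    using dA by (simp add: sum_delta_list)
  also have "Test k \<in> set ?A \<longleftrightarrow> t k < max (t j) (p j)"
    using before[OF s inL(2)[OF jk(1)] inL(1)[OF jk(2)]] g by (auto simp: key_def max_def)
  also have "Proc k \<in> set ?A \<longleftrightarrow> max (t k) (p k) < max (t j) (p j)"
    using before[OF s inL(2)[OF jk(1)] inL(2)[OF jk(2)]] g by (auto simp: key_def max_def)
  finally show ?thesis .
qed



lemma arith0: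
  fixes a b c d m n X Y D :: real
  assumes nn: "a \<ge> 0" "b \<ge> 0" "c \<ge> 0" "d \<ge> 0"
    and m: "a \<le> m" "b \<le> m" "m = a \<or> m = b" and n: "c \<le> n" "d \<le> n" "n = c \<or> n = d"
    and mne: "m \<noteq> n"
    and Dd: "D = (if a < n then a else 0) + (if m < n then b else 0)
        + ((if c < m then c else 0) + (if n < m then d else 0))"
  shows "D \<le> a + b + m"
proof (cases "m < n")
  case True
  then have "D = a + b + (if c < m then c else 0)" using Dd m by auto
  then show ?thesis using nn m by (auto split: if_splits)
next
  case False
  then have nm: "n < m" using mne by auto
  then have D: "D = (if a < n then a else 0) + c + d" using Dd n by auto
  show ?thesis
  proof (cases "a < n")
    case True
    then have "m = b" using m nm by auto
    then show ?thesis using D True n nm by auto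
  next
    case False
    then show ?thesis using D n nm m nn by auto
  qed
qed

lemma arith1:
  fixes a b c d m n X Y D :: real
  assumes nn: "a \<ge> 0" "b \<ge> 0" "c \<ge> 0" "d \<ge> 0"
    and m: "a \<le> m" "b \<le> m" "m = a \<or> m = b" and n: "c \<le> n" "d \<le> n" "n = c \<or> n = d"
    and mne: "m \<noteq> n"
    and Dd: "D = (if a < n then a else 0) + (if m < n then b else 0)
        + ((if c < m then c else 0) + (if n < m then d else 0))"
    and X: "0 \<le> X" "X \<le> m" and Y: "0 \<le> Y" "Y \<le> c" and XY: "c \<le> m \<Longrightarrow> Y \<le> X"
    and cases: "c > m \<or> c < X \<or> d < Y"
  shows "D \<le> a + b + X"
proof (cases "m < n")
  case True
  then have D: "D = a + b + (if c < m then c else 0)" using Dd m by auto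
  show ?thesis
  proof (cases "c < m")
    case True
    then have "c < X \<or> d < Y" using cases by auto
    moreover have "d < Y \<Longrightarrow> False" using True Y n \<open>m < n\<close> by auto
    ultimately show ?thesis using D True by auto
  next
    case False then show ?thesis using D X by auto
  qed
next
  case False
  then have nm: "n < m" using mne by auto
  then have D: "D = (if a < n then a else 0) + c + d" using Dd n by auto
  have cX: "c < X \<or> d < Y" using cases n nm by auto
  show ?thesis
  proof (cases "a < n")
    case True
    then have mb: "m = b" using m nm by auto
    show ?thesis
    proof (cases "c < X")
      case True then show ?thesis using D \<open>a < n\<close> n nm mb by auto
    next
      case False
      then have "d < Y" using cX by auto
      then have "n = c" using n Y by auto
      then show ?thesis using D \<open>a < n\<close> n nm mb \<open>d < Y\<close> XY by auto
    qed
  next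
    case False
    show ?thesis
    proof (cases "c < X")
      case True then show ?thesis using D False n nm m nn by auto
    next
      case False
      then have "d < Y" using cX by auto
      then have "n = c" using n Y by auto
      then show ?thesis using D \<open>\<not> a < n\<close> n nm m nn \<open>d < Y\<close> XY by auto
    qed
  qed
qed

lemma arith:
  fixes a b c d \<mu> \<nu> D :: real
  assumes nn: "a \<ge> 0" "b \<ge> 0" "c \<ge> 0" "d \<ge> 0" and mu: "\<mu> > 1" and nu: "0 < \<nu>" "\<nu> < 1"
    and mne: "max a b \<noteq> max c d"
    and nr: "\<not> (max a b \<ge> \<mu> * min a b \<and> max a b \<ge> c \<and> c \<ge> \<nu> * max a b \<and> d \<ge> \<nu> * c)"
    and Dd: "D = (if a < max c d then a else 0) + (if max a b < max c d then b else 0)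
        + ((if c < max a b then c else 0) + (if max c d < max a b then d else 0))"
  shows "D \<le> max ((2 * \<mu> + 1) / (\<mu> + 1)) (1 + \<nu>) * (a + b)"
proof -
  let ?m = "max a b"
  have mf: "a \<le> ?m" "b \<le> ?m" "?m = a \<or> ?m = b" by auto
  have nf: "c \<le> max c d" "d \<le> max c d" "max c d = c \<or> max c d = d" by auto
  have sm: "?m + min a b = a + b" by (simp add: max_def min_def)
  have c1: "D \<le> (2 * \<mu> + 1) / (\<mu> + 1) * (a + b)" if bal: "?m < \<mu> * min a b"
  proof -
    have D1: "D \<le> a + b + ?m" using arith0[OF nn mf nf mne Dd] .
    have "?m * \<mu> + ?m \<le> \<mu> * ?m + \<mu> * min a b" using bal by simp
    also have "\<dots> = \<mu> * (a + b)" using sm by (metis distrib_left)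
    finally have "?m * (\<mu> + 1) \<le> \<mu> * (a + b)" by (simp add: algebra_simps)
    then have "(a + b + ?m) * (\<mu> + 1) \<le> (2 * \<mu> + 1) * (a + b)" by (simp add: algebra_simps)
    then have "a + b + ?m \<le> (2 * \<mu> + 1) / (\<mu> + 1) * (a + b)" using mu by (simp add: field_simps)
    then show ?thesis using D1 by linarith
  qed
  have c2: "D \<le> (1 + \<nu>) * (a + b)" if imb: "?m \<ge> \<mu> * min a b"
  proof -
    define X where "X = \<nu> * ?m"
    define Y where "Y = \<nu> * c"
    have X: "0 \<le> X" "X \<le> ?m" using nu nn unfolding X_def by (auto intro: mult_left_le_one_le)
    have Y: "0 \<le> Y" "Y \<le> c" using nu nn unfolding Y_def by (auto intro: mult_left_le_one_le)
    have XY: "c \<le> ?m \<Longrightarrow> Y \<le> X" using nu unfolding X_def Y_def by simp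
    have cases: "c > ?m \<or> c < X \<or> d < Y" using nr imb unfolding X_def Y_def by auto
    have "D \<le> a + b + X" using arith1[OF nn mf nf mne Dd X Y XY cases] .
    also have "X \<le> \<nu> * (a + b)" unfolding X_def using nu nn by (intro mult_left_mono) auto
    finally show ?thesis by (simp add: algebra_simps)
  qed
  show ?thesis
  proof (cases "?m < \<mu> * min a b")
    case True
    then show ?thesis using c1 nn by (smt (verit) max.cobounded1 mult_right_mono)
  next
    case False
    then show ?thesis using c2 nn by (smt (verit) max.cobounded2 mult_right_mono)
  qed
qed


theorem mainTheorem4:
  fixes J :: "'a set" and t p :: "'a \<Rightarrow> real" and \<mu> \<nu> :: real and j k :: 'a
  assumes "finite J"
    and "\<forall>i\<in>J. t i \<ge> 0 \<and> p i \<ge> 0"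
    and "general_position J t p"
    and "\<mu> > 1" and "0 < \<nu>" and "\<nu> < 1" and "\<mu> * \<nu> > 1"
    and "1 + 1 / \<mu> \<le> \<nu> + \<nu>\<^sup>2"
    and "j \<in> J" and "k \<in> J" and "j \<noteq> k"
    and "t j + p j < t k + p k"
    and "\<not> red_pair \<mu> \<nu> t p j k"
  shows "DD J t p j k \<le> max ((2 * \<mu> + 1) / (\<mu> + 1)) (1 + \<nu>) * min (t j + p j) (t k + p k)"
proof -
  have g: "t k \<noteq> t j" "t k \<noteq> p j" "p k \<noteq> t j" "p k \<noteq> p j"
    using assms(3,9,10,11) unfolding general_position_def by metis+
  have mne: "max (t j) (p j) \<noteq> max (t k) (p k)" using g by (auto simp: max_def)
  have nr: "\<not> (max (t j) (p j) \<ge> \<mu> * min (t j) (p j) \<and> max (t j) (p j) \<ge> t k \<and> t k \<ge> \<nu> * max (t j) (p j) \<and> p k \<ge> \<nu> * t k)"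
    using assms(11,13) unfolding red_pair_def imbalanced_def by auto
  have D: "DD J t p j k = (if t j < max (t k) (p k) then t j else 0) + (if max (t j) (p j) < max (t k) (p k) then p j else 0)
        + ((if t k < max (t j) (p j) then t k else 0) + (if max (t k) (p k) < max (t j) (p j) then p k else 0))"
    unfolding DD_def using dd_formula[OF assms(1,3,10,9) assms(11)[symmetric]] dd_formula[OF assms(1,3,9,10,11)] by simp
  have "DD J t p j k \<le> max ((2 * \<mu> + 1) / (\<mu> + 1)) (1 + \<nu>) * (t j + p j)"
    using arith[OF _ _ _ _ assms(4,5,6) mne nr D] assms(2,9,10) by auto
  then show ?thesis using assms(12) by (simp add: min_def)
qed

end
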